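(* In the asymptotic framework described in the context, suppose $y>0$, $F_{\Sigma_n}(u)\to F_\Sigma(u)$ almost surely for almost every $u>0$, and the eigenvalues of each $\Sigma_n$ lie in a segment $[\sigma_{\min},\sigma_{\max}]$. Then for any real $z<0$, the fixed point equation in $s$ \[s=1+\lim_{n,d\to\infty}\frac1n\mathrm{tr}\left(zs\Sigma_n\left(I-zs\Sigma_n\right)^{-1}\right)\] has at most one non-negative real solution.
   Context: Asymptotic framework: a sequence of positive semidefinite matrices $\Sigma_n\in\mathbb{R}^{d\times d}$ indexed by $n$, with $d=d(n)$, $n,d\to\infty$, $d/n\to y\in[0,1)$. $F_{\Sigma_n}(u)=d^{-1}\sum_{i=1}^d\mathbb{I}(\lambda_i(\Sigma_n)\le u)$ is the empirical spectral distribution, $F_\Sigma$ a limiting distribution function; $0<\sigma_{\min}\le\sigma_{\max}$ do not depend on $n$. *)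

theory Defs
  imports "HOL-Probability.Probability" "Jordan_Normal_Form.Char_Poly"
    "Jordan_Normal_Form.Gauss_Jordan_Elimination"
begin

definition mat_trace :: "'a :: comm_ring_1 mat \<Rightarrow> 'a" where
  "mat_trace A = (\<Sum>i<dim_row A. A $$ (i, i))"

text \<open>Empirical spectral distribution F_A(u) = d^{-1} #{i. lambda_i(A) \<le> u},
  eigenvalues counted with (algebraic) multiplicity, i.e. as roots of the
  characteristic polynomial.  For real symmetric matrices all eigenvalues are real,
  so this is exactly the paper's definition.\<close>
definition esd :: "real mat \<Rightarrow> real \<Rightarrow> real" where
  "esd A u = (\<Sum>x\<in>{x. poly (char_poly A) x = 0 \<and> x \<le> u}. real (order x (char_poly A)))
             / real (dim_row A)"

definition resolvent_term :: "nat \<Rightarrow> real mat \<Rightarrow> real \<Rightarrow> real \<Rightarrow> real" where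
  "resolvent_term n S z s =
     mat_trace (((z * s) \<cdot>\<^sub>m S) * the (mat_inverse (1\<^sub>m (dim_row S) - (z * s) \<cdot>\<^sub>m S))) / real n"

end

theory Submission
  imports Defs
begin


lemma self_sp_pos:
  fixes v :: "real vec"
  assumes v: "v \<in> carrier_vec m" and nz: "v \<noteq> 0\<^sub>v m"
  shows "0 < v \<bullet> v"
proof -
  obtain i where i: "i < m" "v $ i \<noteq> 0" using nz v by (metis carrier_vecD eq_vecI index_zero_vec(1,2))
  have "v \<bullet> v = (\<Sum>j<m. (v $ j)^2)" using v unfolding scalar_prod_def
    by (auto simp: power2_eq_square lessThan_atLeast0)
  also have "\<dots> > 0"
    by (rule sum_pos2[of _ i]) (use i in auto)
  finally show ?thesis .
qed

lemma self_sp_nonneg: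
  fixes v :: "real vec"
  assumes v: "v \<in> carrier_vec m"
  shows "0 \<le> v \<bullet> v"
  using self_sp_pos[OF v] v by (cases "v = 0\<^sub>v m") auto

lemma smult_mat_vec':
  fixes S :: "real mat"
  assumes S: "S \<in> carrier_mat m m" and v: "v \<in> carrier_vec m"
  shows "(t \<cdot>\<^sub>m S) *\<^sub>v v = t \<cdot>\<^sub>v (S *\<^sub>v v)"
  using S v by (intro eq_vecI) (auto simp: scalar_prod_def sum_distrib_left mult.assoc)

lemma inv_exists:
  fixes S :: "real mat" and t :: real
  assumes S: "S \<in> carrier_mat m m" and psd: "\<And>v. v \<in> carrier_vec m \<Longrightarrow> 0 \<le> v \<bullet> (S *\<^sub>v v)"
    and t: "t \<le> 0"
  shows "\<exists>C. mat_inverse (1\<^sub>m m - t \<cdot>\<^sub>m S) = Some C"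
proof -
  let ?K = "1\<^sub>m m - t \<cdot>\<^sub>m S"
  have K: "?K \<in> carrier_mat m m" using S by auto
  have "det ?K \<noteq> 0"
  proof
    assume "det ?K = 0"
    then obtain v where v: "v \<in> carrier_vec m" "v \<noteq> 0\<^sub>v m" "?K *\<^sub>v v = 0\<^sub>v m"
      using det_0_iff_vec_prod_zero_field[OF K] by auto
    have "?K *\<^sub>v v = v - t \<cdot>\<^sub>v (S *\<^sub>v v)"
      using S v by (simp add: minus_mult_distrib_mat_vec[of _ m m _ v] smult_mat_vec')
    then have e: "v - t \<cdot>\<^sub>v (S *\<^sub>v v) = 0\<^sub>v m" using v by simp
    have "0 = v \<bullet> (v - t \<cdot>\<^sub>v (S *\<^sub>v v))" unfolding e using v by simp
    also have "\<dots> = v \<bullet> v - t * (v \<bullet> (S *\<^sub>v v))"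
      using v S by (simp add: scalar_prod_minus_distrib[of _ m])
    finally have "v \<bullet> v = t * (v \<bullet> (S *\<^sub>v v))" by simp
    moreover have "t * (v \<bullet> (S *\<^sub>v v)) \<le> 0" using psd[OF v(1)] t by (simp add: mult_nonpos_nonneg)
    ultimately show False using self_sp_pos[OF v(1,2)] by simp
  qed
  then have "?K \<in> Units (ring_mat TYPE(real) m undefined)" by (rule det_non_zero_imp_unit[OF K])
  then show ?thesis using mat_inverse(1)[OF K, where b=undefined] by (cases "mat_inverse ?K") auto
qed

lemma trace_minus:
  fixes A B :: "real mat"
  assumes "A \<in> carrier_mat m m" "B \<in> carrier_mat m m"
  shows "mat_trace (A - B) = mat_trace A - mat_trace B"
  using assms unfolding mat_trace_def by (simp add: sum_subtractf)

lemma trace_smult: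
  fixes A :: "real mat"
  assumes "A \<in> carrier_mat m m"
  shows "mat_trace (c \<cdot>\<^sub>m A) = c * mat_trace A"
  using assms unfolding mat_trace_def by (simp add: sum_distrib_left)

lemma trace_one: "mat_trace (1\<^sub>m m :: real mat) = real m"
  unfolding mat_trace_def by simp

lemma trace_nonneg:
  fixes M :: "real mat"
  assumes M: "M \<in> carrier_mat m m" and q: "\<And>v. v \<in> carrier_vec m \<Longrightarrow> 0 \<le> v \<bullet> (M *\<^sub>v v)"
  shows "0 \<le> mat_trace M"
proof -
  have "M $$ (i,i) \<ge> 0" if i: "i < m" for i
  proof -
    have "unit_vec m i \<bullet> (M *\<^sub>v unit_vec m i) = M $$ (i,i)"
      using M i by simp
    then show ?thesis using q[of "unit_vec m i"] by simp
  qed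
  then show ?thesis using M unfolding mat_trace_def by (auto intro: sum_nonneg)
qed

lemma inv_comm:
  fixes S C :: "real mat"
  assumes S: "S \<in> carrier_mat m m" and C: "C \<in> carrier_mat m m"
    and KC: "(1\<^sub>m m - t \<cdot>\<^sub>m S) * C = 1\<^sub>m m" and CK: "C * (1\<^sub>m m - t \<cdot>\<^sub>m S) = 1\<^sub>m m"
  shows "C * S = S * C"
proof -
  let ?K = "1\<^sub>m m - t \<cdot>\<^sub>m S"
  have K: "?K \<in> carrier_mat m m" using S by auto
  have KS: "?K * S = S * ?K"
  proof -
    have "?K * S = S - t \<cdot>\<^sub>m (S * S)"
      using S by (simp add: minus_mult_distrib_mat[where nr=m and n=m and nc=m] mult_smult_assoc_mat[of _ m m _ m])
    moreover have "S * ?K = S - t \<cdot>\<^sub>m (S * S)"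
      using S by (simp add: mult_minus_distrib_mat[where nr=m and n=m and nc=m] mult_smult_distrib[of _ m m _ m])
    ultimately show ?thesis by simp
  qed
  have "C * S = C * S * (?K * C)" using KC C S by simp
  also have "\<dots> = C * (S * (?K * C))" using assoc_mult_mat[of C m m S m "?K * C" m] C S K by auto
  also have "\<dots> = C * ((S * ?K) * C)" using assoc_mult_mat[of S m m ?K m C m] C S K by auto
  also have "\<dots> = C * (S * ?K) * C" using assoc_mult_mat[of C m m "S * ?K" m C m] C S K by auto
  also have "\<dots> = C * (?K * S) * C" using KS by simp
  also have "\<dots> = (C * ?K) * S * C" using C S K by simp
  also have "\<dots> = S * C" using CK C S by simp
  finally show ?thesis .
qed

lemma key_quad:
  fixes S C1 C2 :: "real mat"
  assumes S: "S \<in> carrier_mat m m" and psd: "\<And>v. v \<in> carrier_vec m \<Longrightarrow> 0 \<le> v \<bullet> (S *\<^sub>v v)"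
    and C1: "C1 \<in> carrier_mat m m" and C2: "C2 \<in> carrier_mat m m"
    and KC1: "(1\<^sub>m m - t1 \<cdot>\<^sub>m S) * C1 = 1\<^sub>m m" and CK1: "C1 * (1\<^sub>m m - t1 \<cdot>\<^sub>m S) = 1\<^sub>m m"
    and KC2: "(1\<^sub>m m - t2 \<cdot>\<^sub>m S) * C2 = 1\<^sub>m m"
    and t1: "t1 \<le> 0" and t2: "t2 \<le> 0"
    and v: "v \<in> carrier_vec m"
  shows "0 \<le> v \<bullet> ((C1 * S * C2) *\<^sub>v v)"
proof -
  let ?K1 = "1\<^sub>m m - t1 \<cdot>\<^sub>m S"
  let ?K2 = "1\<^sub>m m - t2 \<cdot>\<^sub>m S"
  have K1: "?K1 \<in> carrier_mat m m" and K2: "?K2 \<in> carrier_mat m m" using S by auto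
  define w where "w = C1 *\<^sub>v (C2 *\<^sub>v v)"
  define a where "a = S *\<^sub>v w"
  define b where "b = S *\<^sub>v a"
  define p where "p = ?K1 *\<^sub>v w"
  have w: "w \<in> carrier_vec m" and a: "a \<in> carrier_vec m" and b: "b \<in> carrier_vec m"
    and p: "p \<in> carrier_vec m"
    using C1 C2 S v K1 by (auto simp: w_def a_def b_def p_def)
  have comm: "C1 * S = S * C1" by (rule inv_comm[OF S C1 KC1 CK1])
  have "(C1 * S * C2) *\<^sub>v v = (C1 * S) *\<^sub>v (C2 *\<^sub>v v)"
    by (rule assoc_mult_mat_vec[of "C1*S" m m C2 m v]) (use C1 C2 S v in auto)
  also have "\<dots> = (S * C1) *\<^sub>v (C2 *\<^sub>v v)" by (simp add: comm)
  also have "\<dots> = a" unfolding a_def w_def using C1 C2 S v by simp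
  finally have Mv: "(C1 * S * C2) *\<^sub>v v = a" .
  have "p = (?K1 * C1) *\<^sub>v (C2 *\<^sub>v v)" unfolding p_def w_def using C1 C2 K1 v by simp
  also have "\<dots> = C2 *\<^sub>v v" using KC1 C2 v by simp
  finally have pv: "p = C2 *\<^sub>v v" .
  have "?K2 *\<^sub>v p = (?K2 * C2) *\<^sub>v v" unfolding pv using K2 C2 v by simp
  also have "\<dots> = v" using KC2 v by simp
  finally have vK: "v = ?K2 *\<^sub>v p" by simp
  have p_eq: "p = w - t1 \<cdot>\<^sub>v a"
    unfolding p_def a_def using S w by (simp add: minus_mult_distrib_mat_vec[of _ m m _ w] smult_mat_vec')
  have Sp: "S *\<^sub>v p = a - t1 \<cdot>\<^sub>v b"
    unfolding p_eq b_def using S w a by (simp add: mult_minus_distrib_mat_vec[of _ m m] mult_mat_vec a_def)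
  have vv: "v = p - t2 \<cdot>\<^sub>v (S *\<^sub>v p)"
    unfolding vK using S p by (simp add: minus_mult_distrib_mat_vec[of _ m m _ p] smult_mat_vec')
  have "v \<bullet> a = p \<bullet> a - t2 * ((S *\<^sub>v p) \<bullet> a)"
    unfolding vv using p S a by (simp add: minus_scalar_prod_distrib[of _ m])
  also have "p \<bullet> a = w \<bullet> a - t1 * (a \<bullet> a)"
    unfolding p_eq using w a by (simp add: minus_scalar_prod_distrib[of _ m])
  also have "(S *\<^sub>v p) \<bullet> a = a \<bullet> a - t1 * (b \<bullet> a)"
    unfolding Sp using b a by (simp add: minus_scalar_prod_distrib[of _ m])
  finally have eq: "v \<bullet> a = w \<bullet> a - t1 * (a \<bullet> a) - t2 * (a \<bullet> a) + (t1 * t2) * (b \<bullet> a)"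
    by (simp add: algebra_simps)
  have "0 \<le> w \<bullet> a" unfolding a_def by (rule psd[OF w])
  moreover have "0 \<le> a \<bullet> a" by (rule self_sp_nonneg[OF a])
  moreover have "0 \<le> b \<bullet> a" using psd[OF a] comm_scalar_prod[OF a b] unfolding b_def by simp
  moreover have "0 \<le> t1 * t2" using t1 t2 by (simp add: mult_nonpos_nonpos)
  ultimately have "0 \<le> w \<bullet> a - t1 * (a \<bullet> a) - t2 * (a \<bullet> a) + (t1 * t2) * (b \<bullet> a)"
    using t1 t2 mult_nonpos_nonneg[of t1 "a \<bullet> a"] mult_nonpos_nonneg[of t2 "a \<bullet> a"]
      mult_nonneg_nonneg[of "t1 * t2" "b \<bullet> a"] by linarith
  then show ?thesis using eq Mv by simp
qed

lemma res_formula: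
  fixes S C :: "real mat"
  assumes S: "S \<in> carrier_mat m m" and C: "C \<in> carrier_mat m m"
    and KC: "(1\<^sub>m m - t \<cdot>\<^sub>m S) * C = 1\<^sub>m m"
  shows "mat_trace ((t \<cdot>\<^sub>m S) * C) = mat_trace C - real m"
proof -
  let ?K = "1\<^sub>m m - t \<cdot>\<^sub>m S"
  have K: "?K \<in> carrier_mat m m" using S by auto
  have "t \<cdot>\<^sub>m S = 1\<^sub>m m - ?K" using S by (intro eq_matI) auto
  then have "(t \<cdot>\<^sub>m S) * C = 1\<^sub>m m * C - ?K * C"
    using minus_mult_distrib_mat[of "1\<^sub>m m" m m ?K C m] K C by simp
  also have "\<dots> = C - 1\<^sub>m m" using KC C by simp
  finally show ?thesis using trace_minus[OF C one_carrier_mat] trace_one by simp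
qed

lemma diff_formula:
  fixes S C1 C2 :: "real mat"
  assumes S: "S \<in> carrier_mat m m"
    and C1: "C1 \<in> carrier_mat m m" and C2: "C2 \<in> carrier_mat m m"
    and CK1: "C1 * (1\<^sub>m m - t1 \<cdot>\<^sub>m S) = 1\<^sub>m m"
    and KC2: "(1\<^sub>m m - t2 \<cdot>\<^sub>m S) * C2 = 1\<^sub>m m"
  shows "C1 - C2 = (t1 - t2) \<cdot>\<^sub>m (C1 * S * C2)"
proof -
  let ?K1 = "1\<^sub>m m - t1 \<cdot>\<^sub>m S"
  let ?K2 = "1\<^sub>m m - t2 \<cdot>\<^sub>m S"
  have K1: "?K1 \<in> carrier_mat m m" and K2: "?K2 \<in> carrier_mat m m" using S by auto
  have "(t1 - t2) \<cdot>\<^sub>m S = ?K2 - ?K1" using S by (intro eq_matI) (auto simp: algebra_simps)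
  have "(t1 - t2) \<cdot>\<^sub>m (C1 * S * C2) = C1 * ((t1 - t2) \<cdot>\<^sub>m S) * C2"
    using C1 C2 S by (simp add: mult_smult_distrib[of _ m m _ m] mult_smult_assoc_mat[of _ m m _ m])
  also have "\<dots> = C1 * (?K2 - ?K1) * C2" by (simp add: \<open>(t1 - t2) \<cdot>\<^sub>m S = ?K2 - ?K1\<close>)
  also have "C1 * (?K2 - ?K1) = C1 * ?K2 - C1 * ?K1"
    by (rule mult_minus_distrib_mat[OF C1 K2 K1])
  also have "(C1 * ?K2 - C1 * ?K1) * C2 = C1 * ?K2 * C2 - C1 * ?K1 * C2"
    by (rule minus_mult_distrib_mat[where nr=m and n=m and nc=m]) (use C1 C2 K1 K2 in auto)
  also have "C1 * ?K2 * C2 = C1" using assoc_mult_mat[of C1 m m ?K2 m C2 m] C1 C2 K2 KC2 by simp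
  also have "C1 * ?K1 * C2 = C2" using CK1 C2 by simp
  finally show ?thesis by simp
qed

lemma res_mono:
  fixes S :: "real mat"
  assumes S: "S \<in> carrier_mat m m" and psd: "\<And>v. v \<in> carrier_vec m \<Longrightarrow> 0 \<le> v \<bullet> (S *\<^sub>v v)"
    and z: "z < 0" and s1: "0 \<le> s1" and s12: "s1 \<le> s2"
  shows "resolvent_term N S z s2 \<le> resolvent_term N S z s1"
proof -
  define t1 where "t1 = z * s1"
  define t2 where "t2 = z * s2"
  have t1: "t1 \<le> 0" unfolding t1_def using z s1 by (simp add: mult_nonpos_nonneg)
  have t2: "t2 \<le> 0" unfolding t2_def using z s1 s12 by (simp add: mult_nonpos_nonneg)
  have t12: "t2 \<le> t1" unfolding t1_def t2_def using z s12 by (simp add: mult_left_mono_neg)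
  let ?K1 = "1\<^sub>m m - t1 \<cdot>\<^sub>m S"
  let ?K2 = "1\<^sub>m m - t2 \<cdot>\<^sub>m S"
  have K1: "?K1 \<in> carrier_mat m m" and K2: "?K2 \<in> carrier_mat m m" using S by auto
  obtain C1 where C1i: "mat_inverse ?K1 = Some C1" using inv_exists[OF S psd t1] by auto
  obtain C2 where C2i: "mat_inverse ?K2 = Some C2" using inv_exists[OF S psd t2] by auto
  note P1 = mat_inverse(2)[OF K1 C1i] and P2 = mat_inverse(2)[OF K2 C2i]
  have C1: "C1 \<in> carrier_mat m m" and C2: "C2 \<in> carrier_mat m m" using P1 P2 by auto
  have dS: "dim_row S = m" using S by auto
  have r1: "resolvent_term N S z s1 = (mat_trace C1 - real m) / real N"
    unfolding resolvent_term_def dS t1_def[symmetric] C1i using res_formula[OF S C1] P1 by simp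
  have r2: "resolvent_term N S z s2 = (mat_trace C2 - real m) / real N"
    unfolding resolvent_term_def dS t2_def[symmetric] C2i using res_formula[OF S C2] P2 by simp
  have "mat_trace C1 - mat_trace C2 = (t1 - t2) * mat_trace (C1 * S * C2)"
    using trace_minus[OF C1 C2] diff_formula[OF S C1 C2 _ _, of t1 t2] P1 P2
      trace_smult[of "C1 * S * C2" m] C1 C2 S by simp
  moreover have "0 \<le> mat_trace (C1 * S * C2)"
    by (rule trace_nonneg[of _ m]) (use C1 C2 S key_quad[OF S psd C1 C2 _ _ _ t1 t2] P1 P2 in auto)
  ultimately have "mat_trace C2 \<le> mat_trace C1" using t12
    by (metis diff_ge_0_iff_ge mult_nonneg_nonneg)
  then show ?thesis unfolding r1 r2 by (simp add: divide_right_mono)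
qed


theorem lemmaA3:
  fixes Sigma :: "nat \<Rightarrow> real mat" and d :: "nat \<Rightarrow> nat"
    and y sigma_min sigma_max z :: real and F :: "real \<Rightarrow> real"
  assumes d_lim: "filterlim d at_top sequentially"
    and ratio: "(\<lambda>n. real (d n) / real n) \<longlonglongrightarrow> y"
    and y_pos: "0 < y" and y_lt1: "y < 1"
    and dim: "\<And>n. Sigma n \<in> carrier_mat (d n) (d n)"
    and symm: "\<And>n. transpose_mat (Sigma n) = Sigma n"
    and psd: "\<And>n v. v \<in> carrier_vec (d n) \<Longrightarrow> 0 \<le> scalar_prod v (Sigma n *\<^sub>v v)"
    and smin_pos: "0 < sigma_min" and smin_le: "sigma_min \<le> sigma_max"
    and eig: "\<And>n lam. eigenvalue (Sigma n) lam \<Longrightarrow> sigma_min \<le> lam \<and> lam \<le> sigma_max"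
    and F_dist: "\<exists>M. real_distribution M \<and> F = cdf M"
    and esd_conv: "AE u in lborel. 0 < u \<longrightarrow> (\<lambda>n. esd (Sigma n) u) \<longlonglongrightarrow> F u"
    and z_neg: "z < 0"
  shows "\<forall>s1 s2 L1 L2. 0 \<le> s1 \<and> 0 \<le> s2
            \<and> (\<lambda>n. resolvent_term n (Sigma n) z s1) \<longlonglongrightarrow> L1 \<and> s1 = 1 + L1
            \<and> (\<lambda>n. resolvent_term n (Sigma n) z s2) \<longlonglongrightarrow> L2 \<and> s2 = 1 + L2
            \<longrightarrow> s1 = s2"
proof -
  have psd': "\<And>n v. v \<in> carrier_vec (d n) \<Longrightarrow> 0 \<le> v \<bullet> (Sigma n *\<^sub>v v)"
    using psd by auto
  have le: "L2 \<le> L1" if "0 \<le> a" "a \<le> b"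
    and "(\<lambda>n. resolvent_term n (Sigma n) z a) \<longlonglongrightarrow> L1"
    and "(\<lambda>n. resolvent_term n (Sigma n) z b) \<longlonglongrightarrow> L2" for a b L1 L2
    by (rule LIMSEQ_le[OF that(4) that(3)])
       (use res_mono[OF dim psd' z_neg that(1,2)] in auto)
  show ?thesis
  proof (intro allI impI, elim conjE)
    fix s1 s2 L1 L2
    assume h: "0 \<le> s1" "0 \<le> s2"
      "(\<lambda>n. resolvent_term n (Sigma n) z s1) \<longlonglongrightarrow> L1" "s1 = 1 + L1"
      "(\<lambda>n. resolvent_term n (Sigma n) z s2) \<longlonglongrightarrow> L2" "s2 = 1 + L2"
    show "s1 = s2"
    proof (cases "s1 \<le> s2")
      case True
      then show ?thesis using le[OF h(1) True h(3) h(5)] h by linarith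
    next
      case False
      then show ?thesis using le[OF h(2) _ h(5) h(3)] h by linarith
    qed
  qed
qed

end
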